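(* Let $\mathcal{T}$ be a tangle of order $k$ in a connectivity system $(E,\lambda)$. Let $X$ be a $\mathcal{T}$-strong $k$-separating set, and let $(X_i)_{i=1}^m$ be a partial $k$-sequence for $X$. Then $\mathrm{fcl}_{\mathcal{T}}(X)=X\cup \bigcup_{i=1}^m X_i$ if and only if $(X_i)_{i=1}^m$ is maximal.
   Context: A connectivity system is a pair $(E,\lambda)$ with $E$ finite and $\lambda$ an integer-valued symmetric submodular function on subsets of $E$. $X$ is $k$-separating if $\lambda(X)\le k$. A tangle of order $k$ is a collection $\mathcal T$ of subsets of $E$ with (T1) $\lambda(A)<k$ for $A\in\mathcal T$; (T2) if $\lambda(A)\le k-1$ then $A\in\mathcal T$ or $E-A\in\mathcal T$; (T3) $A\cup B\cup C\ne E$ for $A,B,C\in\mathcal T$; (T4) $E-\{e\}\notin\mathcal T$ for $e\in E$. A set is $\mathcal T$-weak if contained in a member of $\mathcal T$, and $\mathcal T$-strong otherwise. A $\mathcal T$-strong $k$-separating set $X$ is fully closed if $X\cup Y$ is not $k$-separating for every nonempty $\mathcal T$-weak $Y\subseteq E-X$; $\mathrm{fcl}_{\mathcal T}(X)$ is the intersection of all fully closed $k$-separating sets containing $X$. A partial $k$-sequence for $X$ is a sequence $(X_i)_{i=1}^m$ of pairwise disjoint nonempty $\mathcal T$-weak subsets of $E-X$ such that $X\cup\bigcup_{i=1}^jX_i$ is $k$-separating for all $j\le m$. It is maximal if $X\cup\bigcup_{i=1}^m X_i$ is maximal under inclusion among all sets of the form $X\cup\bigcup_{i=1}^{n}Y_i$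 with $(Y_i)_{i=1}^n$ a partial $k$-sequence for $X$. *)

theory Defs
  imports Main
begin

definition connectivity_system :: "'a set \<Rightarrow> ('a set \<Rightarrow> int) \<Rightarrow> bool" where
  "connectivity_system E lam \<longleftrightarrow> finite E
     \<and> (\<forall>X. X \<subseteq> E \<longrightarrow> lam X = lam (E - X))
     \<and> (\<forall>X Y. X \<subseteq> E \<longrightarrow> Y \<subseteq> E \<longrightarrow> lam (X \<union> Y) + lam (X \<inter> Y) \<le> lam X + lam Y)"

definition k_separating :: "('a set \<Rightarrow> int) \<Rightarrow> int \<Rightarrow> 'a set \<Rightarrow> bool" where
  "k_separating lam k X \<longleftrightarrow> lam X \<le> k"

definition tangle :: "'a set \<Rightarrow> ('a set \<Rightarrow> int) \<Rightarrow> int \<Rightarrow> 'a set set \<Rightarrow> bool" where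
  "tangle E lam k T \<longleftrightarrow>
     (\<forall>A\<in>T. A \<subseteq> E)
   \<and> (\<forall>A\<in>T. lam A < k)
   \<and> (\<forall>A. A \<subseteq> E \<longrightarrow> lam A \<le> k - 1 \<longrightarrow> A \<in> T \<or> E - A \<in> T)
   \<and> (\<forall>A\<in>T. \<forall>B\<in>T. \<forall>C\<in>T. A \<union> B \<union> C \<noteq> E)
   \<and> (\<forall>e\<in>E. E - {e} \<notin> T)"

definition weak :: "'a set set \<Rightarrow> 'a set \<Rightarrow> bool" where
  "weak T Y \<longleftrightarrow> (\<exists>A\<in>T. Y \<subseteq> A)"

definition strong :: "'a set set \<Rightarrow> 'a set \<Rightarrow> bool" where
  "strong T Y \<longleftrightarrow> \<not> weak T Y"

definition fully_closed :: "'a set \<Rightarrow> ('a set \<Rightarrow> int) \<Rightarrow> int \<Rightarrow> 'a set set \<Rightarrow> 'a set \<Rightarrow> bool" where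
  "fully_closed E lam k T X \<longleftrightarrow> X \<subseteq> E \<and> strong T X \<and> k_separating lam k X
     \<and> (\<forall>Y. Y \<subseteq> E - X \<longrightarrow> Y \<noteq> {} \<longrightarrow> weak T Y \<longrightarrow> \<not> k_separating lam k (X \<union> Y))"

text \<open>Intersection taken inside the ground set E (empty intersection = E).\<close>
definition fcl :: "'a set \<Rightarrow> ('a set \<Rightarrow> int) \<Rightarrow> int \<Rightarrow> 'a set set \<Rightarrow> 'a set \<Rightarrow> 'a set" where
  "fcl E lam k T X = E \<inter> \<Inter> {Z. fully_closed E lam k T Z \<and> X \<subseteq> Z}"

definition partial_k_sequence ::
  "'a set \<Rightarrow> ('a set \<Rightarrow> int) \<Rightarrow> int \<Rightarrow> 'a set set \<Rightarrow> 'a set \<Rightarrow> 'a set list \<Rightarrow> bool" where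
  "partial_k_sequence E lam k T X Xs \<longleftrightarrow>
     (\<forall>i<length Xs. \<forall>j<length Xs. i \<noteq> j \<longrightarrow> Xs ! i \<inter> Xs ! j = {})
   \<and> (\<forall>i<length Xs. Xs ! i \<noteq> {} \<and> weak T (Xs ! i) \<and> Xs ! i \<subseteq> E - X)
   \<and> (\<forall>j. 1 \<le> j \<longrightarrow> j \<le> length Xs \<longrightarrow> k_separating lam k (X \<union> \<Union> (set (take j Xs))))"

definition maximal_partial_k_sequence ::
  "'a set \<Rightarrow> ('a set \<Rightarrow> int) \<Rightarrow> int \<Rightarrow> 'a set set \<Rightarrow> 'a set \<Rightarrow> 'a set list \<Rightarrow> bool" where
  "maximal_partial_k_sequence E lam k T X Xs \<longleftrightarrow>
     partial_k_sequence E lam k T X Xs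
   \<and> (\<forall>Ys. partial_k_sequence E lam k T X Ys \<longrightarrow>
          X \<union> \<Union> (set Xs) \<subseteq> X \<union> \<Union> (set Ys) \<longrightarrow> X \<union> \<Union> (set Ys) = X \<union> \<Union> (set Xs))"

end

theory Submission
  imports Defs
begin

lemma lam_E_min:
  assumes "connectivity_system E lam" "A \<subseteq> E"
  shows "lam E \<le> lam A"
proof -
  have s: "\<forall>X. X \<subseteq> E \<longrightarrow> lam X = lam (E - X)"
    and sm: "\<forall>X Y. X \<subseteq> E \<longrightarrow> Y \<subseteq> E \<longrightarrow> lam (X \<union> Y) + lam (X \<inter> Y) \<le> lam X + lam Y"
    using assms(1) unfolding connectivity_system_def by blast+
  have "lam (A \<union> (E - A)) + lam (A \<inter> (E - A)) \<le> lam A + lam (E - A)"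
    using sm[rule_format, of A "E - A"] assms(2) by blast
  moreover have "A \<union> (E - A) = E" "A \<inter> (E - A) = {}" using assms(2) by auto
  moreover have "lam A = lam (E - A)" using s[rule_format, of A] assms(2) by blast
  moreover have "lam E = lam {}" using s[rule_format, of E] by simp
  ultimately show ?thesis by simp
qed

lemma union_sub: "(\<forall>i<length Ys. Ys ! i \<subseteq> E) \<Longrightarrow> \<Union> (set Ys) \<subseteq> E"
  unfolding set_conv_nth by blast

lemma union_take_sub: "(\<forall>i<length Ys. Ys ! i \<subseteq> E) \<Longrightarrow> \<Union> (set (take j Ys)) \<subseteq> E"
  using union_sub[of Ys E] set_take_subset[of j Ys] by blast

lemma weak_sub: "weak T Y \<Longrightarrow> W \<subseteq> Y \<Longrightarrow> weak T W"
  unfolding weak_def by blast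

lemma strong_sup: "strong T X \<Longrightarrow> X \<subseteq> Z \<Longrightarrow> strong T Z"
  unfolding strong_def weak_def by blast

lemma fc_lam:
  assumes cs: "connectivity_system E lam" and tg: "tangle E lam k T"
    and fc: "fully_closed E lam k T Z" and ne: "Z \<noteq> E" and AZ: "A \<subseteq> Z" and sA: "strong T A"
  shows "k \<le> lam A"
proof (rule ccontr)
  assume "\<not> k \<le> lam A"
  hence l: "lam A \<le> k - 1" by simp
  have ZE: "Z \<subseteq> E" using fc unfolding fully_closed_def by blast
  hence AE: "A \<subseteq> E" using AZ by blast
  have "A \<in> T \<or> E - A \<in> T" using tg l AE unfolding tangle_def by blast
  moreover have "A \<notin> T" using sA unfolding strong_def weak_def by blast
  ultimately have c: "E - A \<in> T" by blast
  have w: "weak T (E - Z)" unfolding weak_def using c AZ by blast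
  have "lam E \<le> lam A" using lam_E_min[OF cs AE] .
  moreover have "Z \<union> (E - Z) = E" using ZE by blast
  ultimately have "k_separating lam k (Z \<union> (E - Z))" using l unfolding k_separating_def
    by simp
  moreover have "E - Z \<noteq> {}" using ZE ne by blast
  ultimately show False using fc w unfolding fully_closed_def by blast
qed

lemma lemA:
  assumes cs: "connectivity_system E lam" and tg: "tangle E lam k T"
    and fc: "fully_closed E lam k T Z" and XZ: "X \<subseteq> Z" and sX: "strong T X"
    and ps: "partial_k_sequence E lam k T X Ys"
  shows "j \<le> length Ys \<Longrightarrow> X \<union> \<Union> (set (take j Ys)) \<subseteq> Z"
proof (induction j)
  case 0
  then show ?case using XZ by simp
next
  case (Suc j)
  have ZE: "Z \<subseteq> E" using fc unfolding fully_closed_def by blast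
  have jl: "j < length Ys" using Suc.prems by simp
  have Yp: "Ys ! j \<noteq> {}" "weak T (Ys ! j)" "Ys ! j \<subseteq> E - X"
    using ps jl unfolding partial_k_sequence_def by auto
  define S where "S = X \<union> \<Union> (set (take j Ys))"
  have SZ: "S \<subseteq> Z" using Suc S_def by simp
  have tk: "take (Suc j) Ys = take j Ys @ [Ys ! j]" using jl by (simp add: take_Suc_conv_app_nth)
  have S'eq: "X \<union> \<Union> (set (take (Suc j) Ys)) = S \<union> Ys ! j" unfolding S_def tk by auto
  show ?case
  proof (cases "Z = E")
    case True
    have "\<forall>i<length Ys. Ys ! i \<subseteq> E" using ps unfolding partial_k_sequence_def by blast
    hence "\<Union> (set (take (Suc j) Ys)) \<subseteq> E"
      by (rule union_take_sub)
    then show ?thesis using True XZ by blast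
  next
    case False
    have lS': "lam (S \<union> Ys ! j) \<le> k"
      using ps Suc.prems S'eq unfolding partial_k_sequence_def k_separating_def
      by (metis Suc_le_mono le0 One_nat_def)
    have lZ: "lam Z \<le> k" using fc unfolding fully_closed_def k_separating_def by blast
    have "X \<subseteq> Z \<inter> (S \<union> Ys ! j)" using XZ S_def by blast
    hence "strong T (Z \<inter> (S \<union> Ys ! j))" using strong_sup sX by blast
    hence lA: "k \<le> lam (Z \<inter> (S \<union> Ys ! j))" using fc_lam[OF cs tg fc False] by blast
    have SE: "S \<union> Ys ! j \<subseteq> E" using SZ ZE Yp by blast
    have "lam (Z \<union> (S \<union> Ys ! j)) + lam (Z \<inter> (S \<union> Ys ! j)) \<le> lam Z + lam (S \<union> Ys ! j)"
      using cs ZE SE unfolding connectivity_system_def by blast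
    hence l: "lam (Z \<union> (S \<union> Ys ! j)) \<le> k" using lA lZ lS' by linarith
    define W where "W = Ys ! j - Z"
    have "Z \<union> W = Z \<union> (S \<union> Ys ! j)" using SZ W_def by blast
    hence "k_separating lam k (Z \<union> W)" using l unfolding k_separating_def by simp
    moreover have "W \<subseteq> E - Z" using W_def Yp by blast
    moreover have "weak T W" using weak_sub Yp W_def by blast
    ultimately have "W = {}" using fc unfolding fully_closed_def by blast
    hence "S \<union> Ys ! j \<subseteq> Z" using SZ W_def by blast
    then show ?thesis using S'eq by simp
  qed
qed

lemma lemA':
  assumes cs: "connectivity_system E lam" and tg: "tangle E lam k T"
    and XE: "X \<subseteq> E" and sX: "strong T X"
    and ps: "partial_k_sequence E lam k T X Ys"
  shows "X \<union> \<Union> (set Ys) \<subseteq> fcl E lam k T X"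
proof -
  have "\<forall>i<length Ys. Ys ! i \<subseteq> E" using ps unfolding partial_k_sequence_def by blast
  hence "\<Union> (set Ys) \<subseteq> E" by (rule union_sub)
  moreover have "X \<union> \<Union> (set Ys) \<subseteq> Z" if "fully_closed E lam k T Z" "X \<subseteq> Z" for Z
    using lemA[OF cs tg that sX ps, of "length Ys"] by simp
  ultimately show ?thesis using XE unfolding fcl_def by blast
qed

theorem lemma3p6:
  fixes E :: "'a set" and lam :: "'a set \<Rightarrow> int" and k :: int
    and T :: "'a set set" and X :: "'a set" and Xs :: "'a set list"
  assumes "connectivity_system E lam"
    and "tangle E lam k T"
    and "X \<subseteq> E"
    and "strong T X"
    and "k_separating lam k X"
    and "partial_k_sequence E lam k T X Xs"
  shows "fcl E lam k T X = X \<union> \<Union> (set Xs) \<longleftrightarrow> maximal_partial_k_sequence E lam k T X Xs"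
proof
  assume h: "fcl E lam k T X = X \<union> \<Union> (set Xs)"
  show "maximal_partial_k_sequence E lam k T X Xs"
    unfolding maximal_partial_k_sequence_def
  proof (intro conjI allI impI)
    fix Ys assume p: "partial_k_sequence E lam k T X Ys"
      and s: "X \<union> \<Union> (set Xs) \<subseteq> X \<union> \<Union> (set Ys)"
    show "X \<union> \<Union> (set Ys) = X \<union> \<Union> (set Xs)"
      using lemA'[OF assms(1-4) p] h s by blast
  qed (fact assms(6))
next
  assume m: "maximal_partial_k_sequence E lam k T X Xs"
  define S where "S = X \<union> \<Union> (set Xs)"
  have ps: "partial_k_sequence E lam k T X Xs" by (fact assms(6))
  have XiE: "\<forall>i<length Xs. Xs ! i \<subseteq> E" using ps unfolding partial_k_sequence_def by blast
  hence SE: "S \<subseteq> E" using assms(3) union_sub[OF XiE] unfolding S_def by blast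
  have kS: "k_separating lam k S"
  proof (cases "Xs = []")
    case True then show ?thesis using assms(5) S_def by simp
  next
    case False
    hence "1 \<le> length Xs" by (cases Xs) auto
    hence "k_separating lam k (X \<union> \<Union> (set (take (length Xs) Xs)))"
      using ps unfolding partial_k_sequence_def by blast
    then show ?thesis unfolding S_def by simp
  qed
  have fc: "fully_closed E lam k T S"
    unfolding fully_closed_def
  proof (intro conjI allI impI)
    show "S \<subseteq> E" by (fact SE)
    show "strong T S" using strong_sup assms(4) S_def by blast
    show "k_separating lam k S" by (fact kS)
    fix Y assume Y: "Y \<subseteq> E - S" "Y \<noteq> {}" "weak T Y"
    show "\<not> k_separating lam k (S \<union> Y)"
    proof
      assume kY: "k_separating lam k (S \<union> Y)"
      define Ys where "Ys = Xs @ [Y]"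
      have "partial_k_sequence E lam k T X Ys"
        unfolding partial_k_sequence_def
      proof (intro conjI allI impI)
        fix i j assume "i < length Ys" "j < length Ys" "i \<noteq> j"
        note ij = this
        have disj: "\<forall>i<length Xs. \<forall>j<length Xs. i \<noteq> j \<longrightarrow> Xs ! i \<inter> Xs ! j = {}"
          using ps unfolding partial_k_sequence_def by blast
        have YX: "\<forall>i<length Xs. Xs ! i \<inter> Y = {}"
        proof (intro allI impI)
          fix i assume "i < length Xs"
          hence "Xs ! i \<subseteq> S" unfolding S_def using nth_mem by blast
          then show "Xs ! i \<inter> Y = {}" using Y by blast
        qed
        show "Ys ! i \<inter> Ys ! j = {}"
        proof (cases "i < length Xs")
          case ci: True
          show ?thesis
          proof (cases "j < length Xs")
            case True then show ?thesis using ci ij disj by (simp add: Ys_def nth_append)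
          next
            case False
            hence "j = length Xs" using ij unfolding Ys_def by simp
            then show ?thesis using ci YX by (simp add: Ys_def nth_append)
          qed
        next
          case ci: False
          hence "i = length Xs" using ij unfolding Ys_def by simp
          moreover have "j < length Xs" using ij ci \<open>i = length Xs\<close> unfolding Ys_def by simp
          ultimately show ?thesis using YX by (auto simp add: Ys_def nth_append)
        qed
      next
        fix i assume "i < length Ys"
        have P: "\<forall>i<length Xs. Xs ! i \<noteq> {} \<and> weak T (Xs ! i) \<and> Xs ! i \<subseteq> E - X"
          using ps unfolding partial_k_sequence_def by blast
        have "Ys ! i \<noteq> {} \<and> weak T (Ys ! i) \<and> Ys ! i \<subseteq> E - X"
        proof (cases "i < length Xs")
          case True then show ?thesis using P by (simp add: Ys_def nth_append)
        next
          case False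
          hence "i = length Xs" using \<open>i < length Ys\<close> unfolding Ys_def by simp
          moreover have "Y \<subseteq> E - X" using Y unfolding S_def by blast
          ultimately show ?thesis using Y by (simp add: Ys_def nth_append)
        qed
        then show "Ys ! i \<noteq> {}" "weak T (Ys ! i)" "Ys ! i \<subseteq> E - X" by blast+
      next
        fix j assume j: "1 \<le> j" "j \<le> length Ys"
        show "k_separating lam k (X \<union> \<Union> (set (take j Ys)))"
        proof (cases "j \<le> length Xs")
          case True
          then show ?thesis using ps j unfolding Ys_def partial_k_sequence_def by simp
        next
          case False
          hence "j = Suc (length Xs)" using j unfolding Ys_def by simp
          hence "take j Ys = Xs @ [Y]" unfolding Ys_def by simp
          hence "X \<union> \<Union> (set (take j Ys)) = S \<union> Y" unfolding S_def by auto
          then show ?thesis using kY by simp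
        qed
      qed
      moreover have "X \<union> \<Union> (set Xs) \<subseteq> X \<union> \<Union> (set Ys)" unfolding Ys_def by auto
      ultimately have "X \<union> \<Union> (set Ys) = X \<union> \<Union> (set Xs)" using m
        unfolding maximal_partial_k_sequence_def by blast
      hence "Y \<subseteq> S" unfolding Ys_def S_def by auto
      then show False using Y by blast
    qed
  qed
  have "fcl E lam k T X \<subseteq> S" using fc unfolding fcl_def S_def by blast
  moreover have "S \<subseteq> fcl E lam k T X" using lemA'[OF assms(1-4) ps] S_def by simp
  ultimately show "fcl E lam k T X = X \<union> \<Union> (set Xs)" using S_def by blast
qed

end
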